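(* Let $a\in\mathbb Z$ and let $b$ be a positive even integer with $2+a(b-1)<0$. Then the polynomial $r_{a,b}(X)=1+aX+aX^2+\dots+aX^{b-1}+X^b$ is a reciprocal Salem polynomial.
   Context: A polynomial $f=f_0+\dots+f_nX^n$ ($f_n\ne0$) is reciprocal if $f_i=f_{n-i}$ for all $i$. A Salem polynomial is a monic $f\in\mathbb Z[X]$ having exactly one root $\lambda$ with $|\lambda|>1$, this root being simple. *)

theory Defs
  imports Complex_Main "HOL-Computational_Algebra.Polynomial"
begin

definition reciprocal :: "'a::zero poly \<Rightarrow> bool" where
  "reciprocal f \<longleftrightarrow> f \<noteq> 0 \<and> (\<forall>i\<le>degree f. coeff f i = coeff f (degree f - i))"

definition salem_poly :: "int poly \<Rightarrow> bool" where
  "salem_poly f \<longleftrightarrow> lead_coeff f = 1 \<and>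
     (\<exists>l. poly (map_poly complex_of_int f) l = 0 \<and> cmod l > 1 \<and>
          order l (map_poly complex_of_int f) = 1 \<and>
          (\<forall>m. poly (map_poly complex_of_int f) m = 0 \<and> cmod m > 1 \<longrightarrow> m = l))"

definition r_poly :: "int \<Rightarrow> nat \<Rightarrow> int poly" where
  "r_poly a b = 1 + (\<Sum>i\<in>{1..<b}. monom a i) + monom 1 b"

end

theory Submission imports Defs begin
lemma coeff_r: "b > 0 \<Longrightarrow> coeff (r_poly a b) i = (if i = 0 then 1 else if i < b then a else if i = b then 1 else 0)"
  unfolding r_poly_def by (auto simp: coeff_sum coeff_monom)

lemma map_r: "b > 0 \<Longrightarrow> map_poly complex_of_int (r_poly a b) = 1 + (\<Sum>i\<in>{1..<b}. monom (of_int a) i) + monom 1 b"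
  by (rule poly_eqI) (auto simp: coeff_map_poly coeff_r coeff_sum coeff_monom)

lemma poly_r: "b > 0 \<Longrightarrow> poly (map_poly complex_of_int (r_poly a b)) z = 1 + of_int a * (\<Sum>i\<in>{1..<b}. z^i) + z^b"
  by (simp add: map_r poly_sum poly_monom sum_distrib_left)

lemma tele: "n \<ge> 1 \<Longrightarrow> (z - 1) * (\<Sum>i\<in>{1..<n}. z^i) = z^n - (z::'a::comm_ring_1)"
proof (induction n rule: dec_induct)
  case base then show ?case by simp
next
  case (step n) then show ?case by (simp add: algebra_simps)
qed

lemma polyP: "b > 0 \<Longrightarrow> (z - 1) * poly (map_poly complex_of_int (r_poly a b)) z = z^(b+1) + (of_int a - 1) * z^b - (of_int a - 1) * z - 1"
proof -
  assume b: "b > 0"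
  have "of_int a * ((z - 1) * (\<Sum>i\<in>{1..<b}. z^i)) = of_int a * (z^b - z)" using tele[of b z] b by simp
  then show ?thesis using b by (simp add: poly_r algebra_simps) 
qed

lemma two_i_sin: "cis x - cis (-x) = 2 * \<i> * complex_of_real (sin x)"
  by (simp add: complex_eq_iff)

lemma trig_id:
  fixes c :: real and k :: nat and \<theta> :: real
  shows "cis \<theta> ^ (2*k+1) + of_real c * cis \<theta> ^ (2*k) - of_real c * cis \<theta> - 1
     = cis ((2*real k+1)*\<theta>/2) * (2*\<i>) * of_real (sin ((2*real k+1)*\<theta>/2) + c * sin ((2*real k-1)*\<theta>/2))"
proof -
  define A where "A = (2*real k+1)*\<theta>/2"
  define B where "B = (2*real k-1)*\<theta>/2"
  have "cis ((2*real k+1)*\<theta>/2) * (2*\<i>) * of_real (sin ((2*real k+1)*\<theta>/2) + c * sin ((2*real k-1)*\<theta>/2))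
     = cis A * (cis A - cis (-A)) + of_real c * (cis A * (cis B - cis (-B)))"
    unfolding A_def B_def two_i_sin by (simp add: algebra_simps)
  also have "\<dots> = cis (A + A) - cis (A - A) + of_real c * (cis (A+B) - cis (A - B))"
    by (simp add: algebra_simps cis_mult)
  also have "A + A = real (2*k+1) * \<theta>" unfolding A_def by simp
  also have "A + B = real (2*k) * \<theta>" unfolding A_def B_def by (simp add: field_simps)
  also have "A - B = \<theta>" unfolding A_def B_def by (simp add: field_simps)
  finally have eq: "cis ((2*real k+1)*\<theta>/2) * (2*\<i>) * of_real (sin ((2*real k+1)*\<theta>/2) + c * sin ((2*real k-1)*\<theta>/2)) = cis (real (2 * k + 1) * \<theta>) - cis (A - A) + of_real c * (cis (real (2 * k) * \<theta>) - cis \<theta>)" .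
  have p1: "cis \<theta> ^ (2*k+1) = cis (real (2 * k + 1) * \<theta>)" by (rule DeMoivre)
  have p2: "cis \<theta> ^ (2*k) = cis (real (2 * k) * \<theta>)" by (rule DeMoivre)
  show ?thesis unfolding eq p1 p2 diff_self by (simp add: algebra_simps)
qed

lemma ivt_sign:
  fixes f :: "real \<Rightarrow> real"
  assumes "continuous_on {x..y} f" "x < y" "f x * f y < 0"
  shows "\<exists>t. x < t \<and> t < y \<and> f t = 0"
proof -
  have "f x \<noteq> 0" "f y \<noteq> 0" using assms(3) by auto
  have "\<exists>t. x \<le> t \<and> t \<le> y \<and> f t = 0"
  proof (cases "f x < 0")
    case True
    then have "f y > 0" using assms(3) by (simp add: mult_less_0_iff)
    then show ?thesis using IVT'[of f x 0 y] assms True by auto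
  next
    case False
    then have "f y < 0" using assms(3) by (simp add: mult_less_0_iff)
    then show ?thesis using IVT2'[of f y 0 x] assms False by auto
  qed
  then show ?thesis using \<open>f x \<noteq> 0\<close> \<open>f y \<noteq> 0\<close> by (metis order.order_iff_strict)
qed

definition Hf :: "real \<Rightarrow> nat \<Rightarrow> real \<Rightarrow> real" where
  "Hf c k \<theta> = sin ((2*real k+1)*\<theta>/2) + c * sin ((2*real k-1)*\<theta>/2)"

definition ptf :: "nat \<Rightarrow> nat \<Rightarrow> real" where
  "ptf k j = (if j < k then 2 * real j * pi / (2 * real k - 1) else pi)"

lemma pt_bounds: "k \<ge> 1 \<Longrightarrow> 1 \<le> j \<Longrightarrow> j \<le> k \<Longrightarrow> 0 < ptf k j \<and> ptf k j \<le> pi"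
proof -
  assume k: "k \<ge> 1" and j: "1 \<le> j" "j \<le> k"
  show ?thesis
  proof (cases "j < k")
    case True
    have pos: "2 * real k - 1 > 0" using k by simp
    have "2 * real j \<le> 2 * real k - 1" using True by linarith
    then have "2 * real j * pi \<le> (2 * real k - 1) * pi" by (simp add: mult_right_mono)
    then have "2 * real j * pi / (2 * real k - 1) \<le> pi" using pos by (simp add: divide_le_eq mult.commute)
    moreover have "2 * real j * pi / (2 * real k - 1) > 0" using pos j by simp
    ultimately show ?thesis using True by (simp add: ptf_def)
  qed (simp add: ptf_def)
qed

lemma pt_mono: "k \<ge> 1 \<Longrightarrow> 1 \<le> j \<Longrightarrow> j < k \<Longrightarrow> ptf k j < ptf k (Suc j)"
proof -
  assume k: "k \<ge> 1" and j: "1 \<le> j" "j < k"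
  have pos: "2 * real k - 1 > 0" using k by simp
  show ?thesis
  proof (cases "Suc j < k")
    case True
    then show ?thesis using pos j by (simp add: ptf_def divide_strict_right_mono)
  next
    case False
    then have "j = k - 1" using j by simp
    have "2 * real j < 2 * real k - 1" using j by linarith
    then have "2 * real j * pi < (2 * real k - 1) * pi" by simp
    then have "2 * real j * pi / (2 * real k - 1) < pi" using pos by (simp add: divide_less_eq mult.commute)
    then show ?thesis using False j by (simp add: ptf_def)
  qed
qed

lemma pt_sign: "k \<ge> 1 \<Longrightarrow> c < 1 \<Longrightarrow> 1 \<le> j \<Longrightarrow> j \<le> k \<Longrightarrow> (-1)^j * Hf c k (ptf k j) > 0"
proof -
  assume k: "k \<ge> 1" and c: "c < 1" and j: "1 \<le> j" "j \<le> k"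
  have pos: "2 * real k - 1 > 0" using k by simp
  show ?thesis
  proof (cases "j < k")
    case True
    define p where "p = 2 * real j * pi / (2 * real k - 1)"
    have pp: "ptf k j = p" using True by (simp add: ptf_def p_def)
    have e1: "(2*real k-1)*p/2 = real j * pi" using pos by (simp add: p_def field_simps)
    have e2: "(2*real k+1)*p/2 = real j * pi + p" using pos by (simp add: p_def field_simps)
    have "0 < p \<and> p < pi" using pt_bounds[OF k j(1)] True pp pt_mono[OF k j(1) True] pt_bounds[OF k, of "Suc j"] True by simp
    then have "sin p > 0" by (simp add: sin_gt_zero)
    moreover have "Hf c k p = (-1)^j * sin p" unfolding Hf_def e1 e2 by (simp add: sin_add)
    ultimately show ?thesis using pp by (simp add: power_mult_distrib[symmetric] flip: power_add mult.assoc)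
  next
    case False
    then have "j = k" using j by simp
    have e1: "(2*real k-1)*pi/2 = real k * pi - pi/2" by (simp add: field_simps)
    have e2: "(2*real k+1)*pi/2 = real k * pi + pi/2" by (simp add: field_simps)
    have "Hf c k pi = (-1)^k * (1 - c)" unfolding Hf_def e1 e2 by (simp add: sin_add sin_diff algebra_simps)
    then have "(-1)^k * Hf c k pi = ((-1)^k * (-1)^k) * (1 - c)" by simp
    also have "(-1)^k * (-1)^k = (1::real)" by (simp flip: power_add)
    finally show ?thesis using \<open>j = k\<close> c False by (simp add: ptf_def)
  qed
qed

lemma H_cont: "continuous_on A (Hf c k)"
  unfolding Hf_def by (intro continuous_intros) auto

lemma H_roots:
  assumes k: "k \<ge> 1" and c: "c < 1"
  obtains t where "\<And>j. j \<in> {1..<k} \<Longrightarrow> 0 < t j \<and> t j < pi \<and> Hf c k (t j) = 0"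
    "\<And>i j. i \<in> {1..<k} \<Longrightarrow> j \<in> {1..<k} \<Longrightarrow> i < j \<Longrightarrow> t i < t j"
proof -
  have "\<forall>j\<in>{1..<k}. \<exists>t. ptf k j < t \<and> t < ptf k (Suc j) \<and> Hf c k t = 0"
  proof
    fix j assume j: "j \<in> {1..<k}"
    have s1: "(-1)^j * Hf c k (ptf k j) > 0" using pt_sign[OF k c, of j] j by auto
    have s2: "(-1)^(Suc j) * Hf c k (ptf k (Suc j)) > 0" using pt_sign[OF k c, of "Suc j"] j by auto
    have "((-1)^j * Hf c k (ptf k j)) * ((-1)^(Suc j) * Hf c k (ptf k (Suc j))) > 0" using mult_pos_pos[OF s1 s2] .
    moreover have m1: "(-1::real)^j * (-1)^j = 1" by (simp flip: power_add)
    have "((-1)^j * Hf c k (ptf k j)) * ((-1)^(Suc j) * Hf c k (ptf k (Suc j)))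
        = - (((-1::real)^j * (-1)^j) * (Hf c k (ptf k j) * Hf c k (ptf k (Suc j))))"
      by (simp add: algebra_simps)
    moreover note m1
    ultimately have "Hf c k (ptf k j) * Hf c k (ptf k (Suc j)) < 0" by (metis mult_1 neg_0_less_iff_less)
    then show "\<exists>t. ptf k j < t \<and> t < ptf k (Suc j) \<and> Hf c k t = 0"
      using ivt_sign[OF H_cont pt_mono[OF k]] j by auto
  qed
  then obtain t where t: "\<And>j. j \<in> {1..<k} \<Longrightarrow> ptf k j < t j \<and> t j < ptf k (Suc j) \<and> Hf c k (t j) = 0"
    by metis
  show ?thesis
  proof (rule that)
    fix j assume j: "j \<in> {1..<k}"
    then show "0 < t j \<and> t j < pi \<and> Hf c k (t j) = 0"
      using t[OF j] pt_bounds[OF k, of j] pt_bounds[OF k, of "Suc j"] by auto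
  next
    fix i j assume i: "i \<in> {1..<k}" and j: "j \<in> {1..<k}" and ij: "i < j"
    have "ptf k (Suc i) \<le> ptf k j"
    proof -
      have "\<forall>m. Suc i + m \<le> j \<longrightarrow> ptf k (Suc i) \<le> ptf k (Suc i + m)"
      proof (intro allI)
        fix m show "Suc i + m \<le> j \<longrightarrow> ptf k (Suc i) \<le> ptf k (Suc i + m)"
        proof (induction m)
          case (Suc m)
          then show ?case using pt_mono[OF k, of "Suc i + m"] i j by auto
        qed simp
      qed
      then show ?thesis using ij by (metis le_add_diff_inverse Suc_leI order_refl)
    qed
    then show "t i < t j" using t[OF i] t[OF j] by linarith
  qed
qed


lemma Hf_neg: "Hf c k (-\<theta>) = - Hf c k \<theta>"
  unfolding Hf_def by simp

lemma root_from_H: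
  assumes b: "b = 2*k" "k \<ge> 1" and H0: "Hf (real_of_int a - 1) k \<theta> = 0" and ne: "cis \<theta> \<noteq> 1"
  shows "poly (map_poly complex_of_int (r_poly a b)) (cis \<theta>) = 0"
proof -
  have "(cis \<theta> - 1) * poly (map_poly complex_of_int (r_poly a b)) (cis \<theta>)
      = cis \<theta> ^ (2*k+1) + of_real (real_of_int a - 1) * cis \<theta> ^ (2*k) - of_real (real_of_int a - 1) * cis \<theta> - 1"
    using polyP[of b "cis \<theta>" a] b by simp
  also have "\<dots> = 0" unfolding trig_id using H0 by (simp add: Hf_def)
  finally show ?thesis using ne by simp
qed

lemma real_root:
  fixes a :: int and b :: nat
  assumes "b > 0" "2 + a * (int b - 1) < 0" "a < 0"
  obtains l :: real where "l > 1" "poly (map_poly complex_of_int (r_poly a b)) (of_real l) = 0"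
proof -
  define f where "f x = 1 + real_of_int a * (\<Sum>i\<in>{1..<b}. x^i) + x^b" for x :: real
  have cont: "continuous_on {1..1 - real_of_int a} f" unfolding f_def by (intro continuous_intros)
  have f1: "f 1 < 0"
  proof -
    have "f 1 = 2 + real_of_int a * (real b - 1)" using assms(1) by (simp add: f_def of_nat_diff)
    also have "\<dots> = real_of_int (2 + a * (int b - 1))" by simp
    finally show ?thesis using assms(2) by linarith
  qed
  define M where "M = 1 - real_of_int a"
  have M1: "M > 1" using assms(3) by (simp add: M_def)
  have "(M - 1) * f M = M^(b+1) + (real_of_int a - 1) * M^b - (real_of_int a - 1) * M - 1"
  proof -
    have "real_of_int a * ((M - 1) * (\<Sum>i\<in>{1..<b}. M^i)) = real_of_int a * (M^b - M)" using tele[of b M] assms(1) by simp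
    then show ?thesis by (simp add: f_def algebra_simps)
  qed
  also have "\<dots> = M^2 - 1" by (simp add: M_def algebra_simps power2_eq_square)
  finally have "(M - 1) * f M > 0" using M1 by (simp add: power2_eq_square) (smt (verit) mult_less_cancel_right2)
  then have fM: "f M > 0" using M1 by (simp add: zero_less_mult_iff)
  have "f 1 * f M < 0" using f1 fM by (simp add: mult_neg_pos)
  then obtain l where l: "1 < l" "l < M" "f l = 0" using ivt_sign[of 1 M f] cont M1 unfolding M_def by auto
  have "poly (map_poly complex_of_int (r_poly a b)) (of_real l) = of_real (f l)"
    using assms(1) by (simp add: poly_r f_def)
  then show ?thesis using that l by simp
qed

theorem lemma2:
  fixes a :: int and b :: nat
  assumes "b > 0" and "even b" and "2 + a * (int b - 1) < 0"
  shows "reciprocal (r_poly a b) \<and> salem_poly (r_poly a b)"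
proof -
  have b0: "b > 0" by fact
  obtain k where bk: "b = 2*k" using assms(2) by blast
  have k1: "k \<ge> 1" using b0 bk by simp
  have aneg: "a < 0"
  proof (rule ccontr)
    assume "\<not> a < 0"
    then have "a * (int b - 1) \<ge> 0" using b0 by simp
    then show False using assms(3) by simp
  qed
  define R where "R = map_poly complex_of_int (r_poly a b)"
  have degr: "degree (r_poly a b) = b"
  proof (rule antisym)
    show "degree (r_poly a b) \<le> b" by (rule degree_le) (auto simp: coeff_r b0)
    show "b \<le> degree (r_poly a b)" by (rule le_degree) (auto simp: coeff_r b0)
  qed
  have rne: "r_poly a b \<noteq> 0" using degr b0 by auto
  have recip: "reciprocal (r_poly a b)"
    unfolding reciprocal_def using rne degr b0 by (auto simp: coeff_r)
  have lc: "lead_coeff (r_poly a b) = 1" using degr b0 by (simp add: coeff_r)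
  have degR: "degree R = b" unfolding R_def using degr by (simp add: degree_map_poly)
  have Rne: "R \<noteq> 0" using degR b0 by auto
  define c where "c = real_of_int a - 1"
  have c1: "c < 1" using aneg by (simp add: c_def)
  obtain t where t: "\<And>j. j \<in> {1..<k} \<Longrightarrow> 0 < t j \<and> t j < pi \<and> Hf c k (t j) = 0"
    and tmono: "\<And>i j. i \<in> {1..<k} \<Longrightarrow> j \<in> {1..<k} \<Longrightarrow> i < j \<Longrightarrow> t i < t j"
    using H_roots[OF k1 c1] by blast
  obtain l where l1: "l > 1" and lroot: "poly R (of_real l) = 0"
    using real_root[OF b0 assms(3) aneg] unfolding R_def by blast
  have l2root: "poly R (of_real (1/l)) = 0"
  proof -
    define z where "z = complex_of_real l"
    define C where "C = complex_of_int a - 1"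
    have z0: "z \<noteq> 0" and z1: "z \<noteq> 1" using l1 by (auto simp: z_def)
    have Pz: "z^(b+1) + C * z^b - C * z - 1 = 0"
      using polyP[OF b0, of z a] lroot unfolding R_def z_def C_def by simp
    have "z^(b+1) * ((1/z)^(b+1) + C * (1/z)^b - C * (1/z) - 1) = -(z^(b+1) + C * z^b - C * z - 1)"
      using z0 by (simp add: field_simps power_divide)
    then have P1: "(1/z)^(b+1) + C * (1/z)^b - C * (1/z) - 1 = 0" using Pz z0 by simp
    have "(1/z - 1) * poly R (1/z) = 0" using polyP[OF b0, of "1/z" a] P1 unfolding R_def C_def by simp
    moreover have "1/z \<noteq> 1" using z1 by (simp add: divide_eq_1_iff)
    ultimately show ?thesis using l1 by (auto simp: z_def)
  qed
  have troot: "poly R (cis (t j)) = 0" "poly R (cis (- t j)) = 0" if j: "j \<in> {1..<k}" for j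
  proof -
    have s: "sin (t j) > 0" using t[OF j] by (simp add: sin_gt_zero)
    have ne1: "cis (t j) \<noteq> 1" using s by (auto simp: complex_eq_iff)
    show "poly R (cis (t j)) = 0" unfolding R_def
      using root_from_H[OF bk k1 _ ne1] t[OF j] by (simp add: c_def)
    have ne2: "cis (- t j) \<noteq> 1" using s by (auto simp: complex_eq_iff)
    show "poly R (cis (- t j)) = 0" unfolding R_def
      using root_from_H[OF bk k1 _ ne2] t[OF j] by (simp add: c_def Hf_neg)
  qed
  define A where "A = (\<lambda>j. cis (t j)) ` {1..<k}"
  define B where "B = (\<lambda>j. cis (- t j)) ` {1..<k}"
  define S where "S = A \<union> B \<union> {complex_of_real l, complex_of_real (1/l)}"
  have tinj: "t i = t j \<Longrightarrow> i = j" if "i \<in> {1..<k}" "j \<in> {1..<k}" for i j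
    using tmono[OF that] tmono[OF that(2) that(1)] by (metis less_irrefl nat_neq_iff)
  have cinj: "x = y" if "0 < x" "x < pi" "0 < y" "y < pi" "cos x = cos y" for x y
    using cos_inj_pi that by auto
  have injA: "inj_on (\<lambda>j. cis (t j)) {1..<k}"
  proof (rule inj_onI)
    fix i j assume i: "i \<in> {1..<k}" and j: "j \<in> {1..<k}" and e: "cis (t i) = cis (t j)"
    then have "cos (t i) = cos (t j)" by (metis cis.sel(1))
    then show "i = j" using cinj t[OF i] t[OF j] tinj[OF i j] by blast
  qed
  have injB: "inj_on (\<lambda>j. cis (- t j)) {1..<k}"
  proof (rule inj_onI)
    fix i j assume i: "i \<in> {1..<k}" and j: "j \<in> {1..<k}" and e: "cis (- t i) = cis (- t j)"
    then have "cos (t i) = cos (t j)" by (metis cis.sel(1) cos_minus)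
    then show "i = j" using cinj t[OF i] t[OF j] tinj[OF i j] by blast
  qed
  have ImA: "Im x > 0" if "x \<in> A" for x using that t by (auto simp: A_def sin_gt_zero)
  have ImB: "Im x < 0" if "x \<in> B" for x using that t by (auto simp: B_def sin_gt_zero)
  have cardA: "card A = k - 1" unfolding A_def using injA by (simp add: card_image)
  have cardB: "card B = k - 1" unfolding B_def using injB by (simp add: card_image)
  have "1/l < 1" using l1 by simp
  then have l_ne: "complex_of_real l \<noteq> complex_of_real (1/l)" using l1 by (simp only: of_real_eq_iff)
  have cardS: "card S = b"
  proof -
    have fin: "finite A" "finite B" by (auto simp: A_def B_def)
    have d1: "A \<inter> B = {}"
    proof -
      { fix x assume x: "x \<in> A" "x \<in> B"
        have False using ImA[OF x(1)] ImB[OF x(2)] by linarith }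
      then show ?thesis by blast
    qed
    have Imne: "Im x \<noteq> 0" if x: "x \<in> A \<union> B" for x
    proof (cases "x \<in> A")
      case True then show ?thesis using ImA[OF True] by simp
    next
      case False then have "x \<in> B" using x by simp
      then show ?thesis using ImB[of x] by simp
    qed
    have "complex_of_real l \<notin> A \<union> B" "complex_of_real (1/l) \<notin> A \<union> B"
      using Imne by (metis Im_complex_of_real)+
    then have d2: "(A \<union> B) \<inter> {complex_of_real l, complex_of_real (1/l)} = {}" by blast
    have "card S = card (A \<union> B) + card {complex_of_real l, complex_of_real (1/l)}"
      unfolding S_def using fin d2 by (intro card_Un_disjoint) auto
    also have "card (A \<union> B) = card A + card B" using fin d1 by (intro card_Un_disjoint) auto
    finally show ?thesis using cardA cardB l_ne k1 bk by simp
  qed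
  have Sroots: "S \<subseteq> {x. poly R x = 0}"
  proof
    fix x assume "x \<in> S"
    then consider (a) "x \<in> A" | (b) "x \<in> B" | (c) "x = complex_of_real l" | (d) "x = complex_of_real (1/l)"
      unfolding S_def by blast
    then show "x \<in> {x. poly R x = 0}"
    proof cases
      case a then show ?thesis using troot(1) unfolding A_def by blast
    next
      case b then show ?thesis using troot(2) unfolding B_def by blast
    next
      case c then show ?thesis using lroot by simp
    next
      case d then show ?thesis using l2root by (simp only: mem_Collect_eq)
    qed
  qed
  have finS: "finite S" unfolding S_def A_def B_def by auto
  have rootsfin: "finite {x. poly R x = 0}" using Rne by (rule poly_roots_finite)
  have rootsle: "card {x. poly R x = 0} \<le> b" using card_poly_roots_bound[OF Rne] degR by simp
  have uniq: "m = complex_of_real l" if m: "poly R m = 0" "cmod m > 1" for m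
  proof -
    have "m \<in> S"
    proof (rule ccontr)
      assume "m \<notin> S"
      then have "card (insert m S) = b + 1" using finS cardS by simp
      moreover have "insert m S \<subseteq> {x. poly R x = 0}" using Sroots m by blast
      then have "card (insert m S) \<le> card {x. poly R x = 0}" by (rule card_mono[OF rootsfin])
      ultimately show False using rootsle by linarith
    qed
    moreover have "m \<notin> A" using m by (auto simp: A_def)
    moreover have "m \<notin> B" using m by (auto simp: B_def)
    moreover have "m \<noteq> complex_of_real (1/l)" using m l1 by (auto simp: norm_divide)
    ultimately show ?thesis unfolding S_def by blast
  qed
  have ord: "order (complex_of_real l) R = 1"
  proof -
    have o1: "order (complex_of_real l) R \<noteq> 0" using lroot Rne order_root by blast
    have "\<not> order (complex_of_real l) R \<ge> 2"
    proof
      assume "order (complex_of_real l) R \<ge> 2"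
      then have "[:- complex_of_real l, 1:] ^ 2 dvd R" using order_divides by blast
      then obtain q where q: "R = [:- complex_of_real l, 1:] ^ 2 * q" by (elim dvdE)
      have qne: "q \<noteq> 0" using q Rne by auto
      have "degree R = 2 + degree q" unfolding q by (subst degree_mult_eq) (auto simp: qne degree_linear_power)
      then have dq: "degree q = b - 2" using degR by simp
      have "S - {complex_of_real l} \<subseteq> {x. poly q x = 0}"
      proof
        fix x assume x: "x \<in> S - {complex_of_real l}"
        then have "poly R x = 0" using Sroots by auto
        then have "(x - complex_of_real l)^2 * poly q x = 0" unfolding q by simp
        then show "x \<in> {x. poly q x = 0}" using x by auto
      qed
      then have "card (S - {complex_of_real l}) \<le> card {x. poly q x = 0}"
        using poly_roots_finite[OF qne] by (rule card_mono[rotated])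
      moreover have "card {x. poly q x = 0} \<le> b - 2" using card_poly_roots_bound[OF qne] dq by simp
      moreover have "card (S - {complex_of_real l}) = b - 1"
        using cardS finS by (subst card_Diff_singleton) (auto simp: S_def)
      ultimately have "b - 1 \<le> b - 2" by linarith
      then show False using bk k1 by simp
    qed
    then show ?thesis using o1 by simp
  qed
  have "salem_poly (r_poly a b)"
    unfolding salem_poly_def
  proof (intro conjI exI[of _ "complex_of_real l"])
    show "lead_coeff (r_poly a b) = 1" by (rule lc)
    show "poly (map_poly complex_of_int (r_poly a b)) (complex_of_real l) = 0" using lroot R_def by simp
    show "1 < cmod (complex_of_real l)" using l1 by simp
    show "order (complex_of_real l) (map_poly complex_of_int (r_poly a b)) = 1" using ord R_def by simp
    show "\<forall>m. poly (map_poly complex_of_int (r_poly a b)) m = 0 \<and> 1 < cmod m \<longrightarrow> m = complex_of_real l"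
      using uniq R_def by auto
  qed
  then show ?thesis using recip by simp
qed

end
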